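(* For every $k\ge1$, $gp_k(\mathbf y)=\hat p^K_k(\mathbf y)\big|_{\beta=-1}$ and $gq_k(\mathbf y)=\hat q^K_k(\mathbf y)\big|_{\beta=-1}$.
   Context: $K$-theoretic formal group law: $u+_Fv=u+v+\beta uv$ with $\beta$ invertible, so $\bar u=-u/(1+\beta u)$. Let $\Delta(t;\mathbf y)=\prod_{j\ge1}\frac{1-\bar t\,y_j}{1-t\,y_j}$ for variables $\mathbf y=(y_1,y_2,\ldots)$. Define the symmetric functions $\hat q^K_k(\mathbf y)$ and $\hat p^K_k(\mathbf y)$ ($k\ge0$) by $\Delta(t;\mathbf y)=\sum_{k\ge0}t^k\hat q^K_k(\mathbf y)=\sum_{k\ge0}[[t]]^k\hat p^K_k(\mathbf y)$, where $[[t]]^0=1$ and $[[t]]^k=(t+_Ft)t^{k-1}=(2t+\beta t^2)t^{k-1}$ for $k\ge1$. For a strict partition $\lambda$, $Tab(\lambda)$ is the set of fillings of the (shifted) diagram of $\lambda$ by the ordered alphabet $1'<1<2'<2<\cdots$ with rows and columns weakly increasing, and $Tab'(\lambda)\subset Tab(\lambda)$ consists of those tableaux in which the leftmost box of every row contains a primed letter. For a tableau $T$ set $\mathbf y^T=\prod_{i}y_i^{T_C(i)}\prod_iy_i^{T_R(i')}$, where $T_C(i)$ is the number of columns of $T$ containing the letter $i$ and $T_R(i')$ is the number of rows of $T$ containing $i'$. Then $gp_\lambda(\mathbf y)=\sum_{T\in Tab'(\lambda)}\mathbf y^T$ and $gq_\lambda(\mathbf y)=\sum_{T\in Tab(\lambda)}\mathbf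 y^T$; $gp_k,gq_k$ denote these for the one-row shape $\lambda=(k)$. *)

theory Defs
  imports "HOL-Computational_Algebra.Formal_Power_Series"
begin

definition fgl_add :: "'a::field \<Rightarrow> 'a fps \<Rightarrow> 'a fps \<Rightarrow> 'a fps" where
  "fgl_add \<beta> u v = u + v + fps_const \<beta> * u * v"

definition fgl_bar :: "'a::field \<Rightarrow> 'a fps \<Rightarrow> 'a fps" where
  "fgl_bar \<beta> u = - u * inverse (1 + fps_const \<beta> * u)"

definition Delta :: "'a::field \<Rightarrow> nat \<Rightarrow> (nat \<Rightarrow> 'a) \<Rightarrow> 'a fps" where
  "Delta \<beta> n y = (\<Prod>j\<in>{1..n}.
      (1 - fgl_bar \<beta> fps_X * fps_const (y j)) * inverse (1 - fps_X * fps_const (y j)))"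

definition dbr :: "'a::field \<Rightarrow> nat \<Rightarrow> 'a fps" where
  "dbr \<beta> k = (if k = 0 then 1 else fgl_add \<beta> fps_X fps_X * fps_X ^ (k - 1))"

definition hat_q :: "'a::field \<Rightarrow> nat \<Rightarrow> (nat \<Rightarrow> 'a) \<Rightarrow> nat \<Rightarrow> 'a" where
  "hat_q \<beta> n y k = fps_nth (Delta \<beta> n y) k"

text \<open>The coefficients of Delta in the basis [[t]]^k (the sum is t-adically convergent,
  so coefficient m only involves k \<le> m).\<close>
definition hat_p :: "'a::field \<Rightarrow> nat \<Rightarrow> (nat \<Rightarrow> 'a) \<Rightarrow> nat \<Rightarrow> 'a" where
  "hat_p \<beta> n y = (THE p. \<forall>m. fps_nth (Delta \<beta> n y) m =
                          fps_nth (\<Sum>k\<le>m. dbr \<beta> k * fps_const (p k)) m)"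

definition strict_partition :: "nat list \<Rightarrow> bool" where
  "strict_partition lam \<longleftrightarrow> sorted_wrt (>) lam \<and> (\<forall>x\<in>set lam. x > 0)"

definition shifted_diagram :: "nat list \<Rightarrow> (nat \<times> nat) set" where
  "shifted_diagram lam = {(i, j). i < length lam \<and> i \<le> j \<and> j < i + lam ! i}"

text \<open>Letters of the alphabet 1' < 1 < 2' < 2 < ... are encoded as positive naturals:
  i' is 2i-1 and i is 2i, so the order is the order on nat and a letter c is primed iff c is odd.
  With n variables y 1..y n (all other variables set to 0) only letters up to 2n contribute.\<close>
definition Tab :: "nat \<Rightarrow> nat list \<Rightarrow> (nat \<times> nat \<Rightarrow> nat) set" where
  "Tab n lam = {T. (\<forall>b. b \<notin> shifted_diagram lam \<longrightarrow> T b = 0)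
      \<and> (\<forall>b\<in>shifted_diagram lam. 1 \<le> T b \<and> T b \<le> 2 * n)
      \<and> (\<forall>i j j'. (i, j) \<in> shifted_diagram lam \<longrightarrow> (i, j') \<in> shifted_diagram lam \<longrightarrow> j \<le> j'
                 \<longrightarrow> T (i, j) \<le> T (i, j'))
      \<and> (\<forall>i i' j. (i, j) \<in> shifted_diagram lam \<longrightarrow> (i', j) \<in> shifted_diagram lam \<longrightarrow> i \<le> i'
                 \<longrightarrow> T (i, j) \<le> T (i', j))}"

definition Tab' :: "nat \<Rightarrow> nat list \<Rightarrow> (nat \<times> nat \<Rightarrow> nat) set" where
  "Tab' n lam = {T \<in> Tab n lam. \<forall>i < length lam. odd (T (i, i))}"

definition TC :: "nat list \<Rightarrow> (nat \<times> nat \<Rightarrow> nat) \<Rightarrow> nat \<Rightarrow> nat" where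
  "TC lam T i = card {j. \<exists>r. (r, j) \<in> shifted_diagram lam \<and> T (r, j) = 2 * i}"

definition TR :: "nat list \<Rightarrow> (nat \<times> nat \<Rightarrow> nat) \<Rightarrow> nat \<Rightarrow> nat" where
  "TR lam T i = card {r. \<exists>j. (r, j) \<in> shifted_diagram lam \<and> T (r, j) = 2 * i - 1}"

definition tab_monomial :: "nat \<Rightarrow> nat list \<Rightarrow> (nat \<Rightarrow> 'a::comm_ring_1) \<Rightarrow> (nat \<times> nat \<Rightarrow> nat) \<Rightarrow> 'a" where
  "tab_monomial n lam y T = (\<Prod>i\<in>{1..n}. y i ^ TC lam T i * y i ^ TR lam T i)"

definition gp :: "nat \<Rightarrow> nat list \<Rightarrow> (nat \<Rightarrow> 'a::comm_ring_1) \<Rightarrow> 'a" where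
  "gp n lam y = (\<Sum>T\<in>Tab' n lam. tab_monomial n lam y T)"

definition gq :: "nat \<Rightarrow> nat list \<Rightarrow> (nat \<Rightarrow> 'a::comm_ring_1) \<Rightarrow> 'a" where
  "gq n lam y = (\<Sum>T\<in>Tab n lam. tab_monomial n lam y T)"

end

theory Submission
  imports Defs "HOL-Library.Multiset"
begin

abbreviation MS :: "nat \<Rightarrow> nat \<Rightarrow> nat multiset set" where
  "MS N k \<equiv> multisets_of_size {1..N} k"

lemma decomp_Suc:
  assumes "set_mset M \<subseteq> {1..Suc N}"
  shows "M = filter_mset (\<lambda>x. x \<le> N) M + replicate_mset (count M (Suc N)) (Suc N)"
proof (rule multiset_eqI)
  fix x
  show "count M x = count (filter_mset (\<lambda>x. x \<le> N) M + replicate_mset (count M (Suc N)) (Suc N)) x"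
  proof (cases "x \<le> N")
    case False
    show ?thesis
    proof (cases "x = Suc N")
      case False
      with \<open>\<not> x \<le> N\<close> have "x \<notin># M" using assms by auto
      then show ?thesis using \<open>\<not> x \<le> N\<close> False by (simp add: not_in_iff)
    qed (use False in auto)
  qed auto
qed

lemma MS_Suc_bij:
  "bij_betw (\<lambda>M. (count M (Suc N), filter_mset (\<lambda>x. x \<le> N) M)) (MS (Suc N) k)
      (SIGMA j:{0..k}. MS N (k - j))"
proof (rule bij_betw_byWitness[where f' = "\<lambda>(j, M'). M' + replicate_mset j (Suc N)"])
  show "\<forall>a\<in>MS (Suc N) k. (\<lambda>(j, M'). M' + replicate_mset j (Suc N))
          (count a (Suc N), filter_mset (\<lambda>x. x \<le> N) a) = a"
    using decomp_Suc by (auto simp: multisets_of_size_def)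
  show "\<forall>a'\<in>(SIGMA j:{0..k}. MS N (k - j)). (\<lambda>M. (count M (Suc N), filter_mset (\<lambda>x. x \<le> N) M))
          ((\<lambda>(j, M'). M' + replicate_mset j (Suc N)) a') = a'"
  proof (rule ballI)
    fix p assume p: "p \<in> (SIGMA j:{0..k}. MS N (k - j))"
    obtain j M' where pj: "p = (j, M')" by fastforce
    from p pj have s: "set_mset M' \<subseteq> {1..N}" by (auto simp: multisets_of_size_def)
    have c: "count M' (Suc N) = 0" using s by (auto simp: count_eq_zero_iff)
    have f: "filter_mset (\<lambda>x. x \<le> N) M' = M'" 
    proof (rule multiset_eqI)
      fix x show "count (filter_mset (\<lambda>x. x \<le> N) M') x = count M' x"
        using s by (cases "x \<le> N") (auto simp: not_in_iff[symmetric])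
    qed
    have "filter_mset (\<lambda>x. x \<le> N) (replicate_mset j (Suc N)) = {#}" by (induct j) auto
    then show "(\<lambda>M. (count M (Suc N), filter_mset (\<lambda>x. x \<le> N) M))
          ((\<lambda>(j, M'). M' + replicate_mset j (Suc N)) p) = p"
      using c f pj by simp
  qed
  show "(\<lambda>M. (count M (Suc N), filter_mset (\<lambda>x. x \<le> N) M)) ` MS (Suc N) k \<subseteq> (SIGMA j:{0..k}. MS N (k - j))"
  proof (rule image_subsetI)
    fix M assume M: "M \<in> MS (Suc N) k"
    have "size M = size (filter_mset (\<lambda>x. x \<le> N) M) + count M (Suc N)"
      using decomp_Suc[of M N] M unfolding multisets_of_size_def
      by (metis (no_types, lifting) mem_Collect_eq size_replicate_mset size_union)
    moreover have "set_mset (filter_mset (\<lambda>x. x \<le> N) M) \<subseteq> {1..N}"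
      using M by (auto simp: multisets_of_size_def)
    ultimately show "(count M (Suc N), filter_mset (\<lambda>x. x \<le> N) M) \<in> (SIGMA j:{0..k}. MS N (k - j))"
      using M by (auto simp: multisets_of_size_def)
  qed
  show "(\<lambda>(j, M'). M' + replicate_mset j (Suc N)) ` (SIGMA j:{0..k}. MS N (k - j)) \<subseteq> MS (Suc N) k"
  proof (rule image_subsetI)
    fix p assume p: "p \<in> (SIGMA j:{0..k}. MS N (k - j))"
    obtain j M' where pj: "p = (j, M')" by fastforce
    from p pj have "j \<le> k" "set_mset M' \<subseteq> {1..N}" "size M' = k - j" by (auto simp: multisets_of_size_def)
    then show "(\<lambda>(j, M'). M' + replicate_mset j (Suc N)) p \<in> MS (Suc N) k"
      unfolding pj by (auto simp: multisets_of_size_def split: if_splits)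
  qed
qed

lemma gen_fun:
  fixes g :: "nat \<Rightarrow> nat \<Rightarrow> 'a::field"
  shows "(\<Sum>M\<in>MS N k. \<Prod>l\<in>{1..N}. g l (count M l)) = fps_nth (\<Prod>l\<in>{1..N}. Abs_fps (g l)) k"
proof (induction N arbitrary: k)
  case 0
  have "MS 0 k = (if k = 0 then {{#}} else {})"
    by (auto simp: multisets_of_size_def)
  then show ?case by simp
next
  case (Suc N)
  let ?w = "\<lambda>N M. \<Prod>l\<in>{1..N}. g l (count M l)"
  have w: "?w (Suc N) M = ?w N (filter_mset (\<lambda>x. x \<le> N) M) * g (Suc N) (count M (Suc N))" for M
    by (auto simp: prod.cl_ivl_Suc intro!: prod.cong)
  have "(\<Sum>M\<in>MS (Suc N) k. ?w (Suc N) M)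
      = (\<Sum>(j, M')\<in>(SIGMA j:{0..k}. MS N (k - j)). ?w N M' * g (Suc N) j)"
    unfolding w using sum.reindex_bij_betw[OF MS_Suc_bij[of N k], of "\<lambda>(j, M'). ?w N M' * g (Suc N) j"] by simp
  also have "\<dots> = (\<Sum>j=0..k. \<Sum>M'\<in>MS N (k - j). ?w N M' * g (Suc N) j)"
    by (rule sum.Sigma[symmetric]) (auto intro: finite_multisets_of_size)
  also have "\<dots> = (\<Sum>j=0..k. g (Suc N) j * fps_nth (\<Prod>l\<in>{1..N}. Abs_fps (g l)) (k - j))"
  proof (rule sum.cong[OF refl])
    fix j
    show "(\<Sum>M'\<in>MS N (k - j). ?w N M' * g (Suc N) j) = g (Suc N) j * fps_nth (\<Prod>l\<in>{1..N}. Abs_fps (g l)) (k - j)"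
      using Suc.IH[of "k - j"] by (metis (no_types) sum_distrib_right mult.commute)
  qed
  also have "\<dots> = fps_nth (Abs_fps (g (Suc N)) * (\<Prod>l\<in>{1..N}. Abs_fps (g l))) k"
    by (simp add: fps_mult_nth)
  also have "\<dots> = fps_nth (\<Prod>l\<in>{1..Suc N}. Abs_fps (g l)) k"
    by (simp add: prod.cl_ivl_Suc mult.commute)
  finally show ?case .
qed

definition gg :: "(nat \<Rightarrow> 'a::field) \<Rightarrow> nat \<Rightarrow> nat \<Rightarrow> 'a" where
  "gg y l m = (if odd l then (if m = 0 then 1 else y ((l + 1) div 2)) else y (l div 2) ^ m)"

lemma prod_double:
  "(\<Prod>l\<in>{1..2*(n::nat)}. (f::nat \<Rightarrow> 'b::comm_monoid_mult) l) = (\<Prod>i\<in>{1..n}. f (2*i - 1) * f (2*i))"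
proof (induction n)
  case 0 then show ?case by simp
next
  case (Suc n)
  have e: "2 * Suc n = Suc (Suc (2*n))" by simp
  show ?case unfolding e using Suc by (simp add: prod.cl_ivl_Suc mult.assoc)
qed

lemma geo_fps:
  fixes a :: "'a::field"
  shows "Abs_fps (\<lambda>m. a ^ m) = inverse (1 - fps_X * fps_const a)"
proof -
  have "(1 - fps_X * fps_const a) * Abs_fps (\<lambda>m. a ^ m) = 1"
  proof (rule fps_ext)
    fix m
    show "fps_nth ((1 - fps_X * fps_const a) * Abs_fps (\<lambda>m. a ^ m)) m = fps_nth 1 m"
      by (cases m) (simp_all add: algebra_simps mult.assoc)
  qed
  then show ?thesis by (rule fps_inverse_unique[symmetric])
qed

lemma ones_fps: "inverse (1 - fps_X) = Abs_fps (\<lambda>_. 1::'a::field)"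
proof -
  have "inverse (inverse (Abs_fps (\<lambda>_. 1::'a))) = Abs_fps (\<lambda>_. 1)"
    by (rule fps_inverse_idempotent) simp
  then show ?thesis by (simp add: fps_inverse_gp')
qed

lemma odd_fps:
  fixes a :: "'a::field"
  shows "Abs_fps (\<lambda>m. if m = 0 then 1 else a) = 1 - fgl_bar (-1) fps_X * fps_const a"
proof -
  have "1 + fps_const (-1) * fps_X = (1 - fps_X :: 'a fps)" by (metis fps_const_neg fps_const_1_eq_1 mult_minus_left mult_1 diff_conv_add_uminus)
  then have b: "fgl_bar (-1) fps_X = - fps_X * Abs_fps (\<lambda>_. 1::'a)"
    unfolding fgl_bar_def by (simp add: ones_fps)
  show ?thesis unfolding b
    by (rule fps_ext) (simp add: algebra_simps mult.assoc)
qed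

lemma Delta_prod:
  fixes y :: "nat \<Rightarrow> 'a::field"
  shows "Delta (-1) n y = (\<Prod>l\<in>{1..2*n}. Abs_fps (gg y l))"
proof -
  have "Abs_fps (gg y (2*i - 1)) * Abs_fps (gg y (2*i)) =
     (1 - fgl_bar (-1) fps_X * fps_const (y i)) * inverse (1 - fps_X * fps_const (y i))" if "i \<ge> 1" for i
  proof -
    have "gg y (2*i - 1) = (\<lambda>m. if m = 0 then 1 else y i)"
      using that by (auto simp: gg_def fun_eq_iff)
    moreover have "gg y (2*i) = (\<lambda>m. y i ^ m)"
      by (auto simp: gg_def fun_eq_iff)
    ultimately show ?thesis by (simp add: odd_fps geo_fps)
  qed
  then show ?thesis unfolding Delta_def prod_double by (auto intro!: prod.cong)
qed

definition wt :: "nat \<Rightarrow> (nat \<Rightarrow> 'a::field) \<Rightarrow> nat multiset \<Rightarrow> 'a" where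
  "wt n y M = (\<Prod>l\<in>{1..2*n}. gg y l (count M l))"

definition phi :: "nat \<Rightarrow> (nat \<times> nat \<Rightarrow> nat) \<Rightarrow> nat multiset" where
  "phi k T = mset (map (\<lambda>j. T (0, j)) [0..<k])"

lemma diag1: "(i, j) \<in> shifted_diagram [k] \<longleftrightarrow> i = 0 \<and> j < k"
  by (auto simp: shifted_diagram_def)

lemma Tab1: "T \<in> Tab n [k] \<longleftrightarrow> (\<forall>i j. \<not> (i = 0 \<and> j < k) \<longrightarrow> T (i, j) = 0)
   \<and> (\<forall>j<k. 1 \<le> T (0, j) \<and> T (0, j) \<le> 2 * n)
   \<and> (\<forall>j j'. j \<le> j' \<longrightarrow> j' < k \<longrightarrow> T (0, j) \<le> T (0, j'))"
  unfolding Tab_def by (auto simp: diag1)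

lemma Tab_zero: "T \<in> Tab n lam \<Longrightarrow> b \<notin> shifted_diagram lam \<Longrightarrow> T b = 0"
  unfolding Tab_def by blast

lemma sorted_phi:
  assumes "T \<in> Tab n [k]"
  shows "sorted (map (\<lambda>j. T (0, j)) [0..<k])"
  using assms unfolding Tab1 sorted_iff_nth_mono by auto

lemma phi_bij: "bij_betw (phi k) (Tab n [k]) (MS (2*n) k)"
proof (rule bij_betw_imageI)
  show "inj_on (phi k) (Tab n [k])"
  proof (rule inj_onI)
    fix T T' assume T: "T \<in> Tab n [k]" and T': "T' \<in> Tab n [k]" and e: "phi k T = phi k T'"
    let ?xs = "map (\<lambda>j. T (0, j)) [0..<k]" and ?xs' = "map (\<lambda>j. T' (0, j)) [0..<k]"
    have "sort ?xs' = ?xs" using e sorted_phi[OF T] unfolding phi_def by (intro properties_for_sort) simp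
    moreover have "sort ?xs' = ?xs'" using sorted_phi[OF T'] by (rule sorted_sort_id)
    ultimately have l: "?xs = ?xs'" by simp
    show "T = T'"
    proof (rule ext, clarify)
      fix i j
      show "T (i, j) = T' (i, j)"
      proof (cases "i = 0 \<and> j < k")
        case True
        then show ?thesis using arg_cong[OF l, of "\<lambda>xs. xs ! j"] by simp
      next
        case False
        have "(i, j) \<notin> shifted_diagram [k]" using False by (simp add: diag1)
        then show ?thesis using Tab_zero[OF T] Tab_zero[OF T'] by simp
      qed
    qed
  qed
  show "phi k ` Tab n [k] = MS (2*n) k"
  proof
    show "phi k ` Tab n [k] \<subseteq> MS (2*n) k"
      by (auto simp: phi_def Tab1 multisets_of_size_def)
    show "MS (2*n) k \<subseteq> phi k ` Tab n [k]"
    proof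
      fix M assume M: "M \<in> MS (2*n) k"
      define xs where "xs = sorted_list_of_multiset M"
      have "length xs = size M" unfolding xs_def
        by (metis size_mset mset_sorted_list_of_multiset)
      then have lx: "length xs = k" using M by (simp add: multisets_of_size_def)
      have sx: "set xs \<subseteq> {1..2*n}" using M unfolding xs_def multisets_of_size_def by auto
      have so: "sorted xs" unfolding xs_def by simp
      define T where "T = (\<lambda>(i::nat, j). if i = 0 \<and> j < k then xs ! j else (0::nat))"
      have m: "map (\<lambda>j. T (0, j)) [0..<k] = xs"
        by (rule nth_equalityI) (auto simp: lx T_def)
      have "T \<in> Tab n [k]"
        unfolding Tab1
      proof (intro conjI allI impI)
        fix j assume "j < k"
        then have "xs ! j \<in> set xs" using lx by simp
        then show "1 \<le> T (0, j)" "T (0, j) \<le> 2 * n" using sx \<open>j < k\<close> by (auto simp: T_def)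
      next
        fix j j' :: nat assume "j \<le> j'" "j' < k"
        then show "T (0, j) \<le> T (0, j')" using so lx by (auto simp: T_def sorted_iff_nth_mono)
      qed (auto simp: T_def)
      moreover have "phi k T = M" unfolding phi_def m xs_def by simp
      ultimately show "M \<in> phi k ` Tab n [k]" by blast
    qed
  qed
qed

lemma count_phi: "count (phi k T) l = card {j. j < k \<and> T (0, j) = l}"
  unfolding phi_def count_mset count_list_eq_length_filter length_filter_conv_card
  by (rule arg_cong[where f = card]) auto

lemma weight_eq:
  fixes y :: "nat \<Rightarrow> 'a::field"
  shows "tab_monomial n [k] y T = wt n y (phi k T)"
proof -
  have TC: "TC [k] T i = count (phi k T) (2 * i)" for i
    unfolding TC_def count_phi diag1 by (rule arg_cong[where f = card]) auto
  have TR: "TR [k] T i = (if count (phi k T) (2 * i - 1) = 0 then 0 else 1)" for i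
  proof -
    have c: "count (phi k T) (2 * i - 1) = 0 \<longleftrightarrow> \<not> (\<exists>j<k. T (0, j) = 2 * i - 1)"
      unfolding count_phi by auto
    have "{r. \<exists>j. (r, j) \<in> shifted_diagram [k] \<and> T (r, j) = 2 * i - 1}
       = (if \<exists>j<k. T (0, j) = 2 * i - 1 then {0} else {})"
      by (auto simp: diag1)
    then show ?thesis unfolding TR_def using c by auto
  qed
  show ?thesis
    unfolding tab_monomial_def wt_def prod_double
  proof (rule prod.cong[OF refl])
    fix i assume "i \<in> {1..n}"
    then have i: "odd (2 * i - 1)" "(2 * i - 1 + 1) div 2 = i" by auto
    show "y i ^ TC [k] T i * y i ^ TR [k] T i =
       gg y (2 * i - 1) (count (phi k T) (2 * i - 1)) * gg y (2 * i) (count (phi k T) (2 * i))"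
    proof -
      have g1: "gg y (2 * i - 1) m = (if m = 0 then 1 else y i)" for m using i by (simp add: gg_def)
      have g2: "gg y (2 * i) m = y i ^ m" for m by (simp add: gg_def)
      have h: "y i ^ b * y i ^ (if a = 0 then 0 else 1) = (if a = 0 then 1 else y i) * y i ^ b" for a b :: nat
        by simp
      show ?thesis unfolding TC TR g1 g2 by (rule h)
    qed
  qed
qed

lemma Min_phi:
  assumes "T \<in> Tab n [k]" "k \<ge> 1"
  shows "T (0, 0) = Min (set_mset (phi k T))"
proof -
  let ?xs = "map (\<lambda>j. T (0, j)) [0..<k]"
  have s: "sorted ?xs" by (rule sorted_phi[OF assms(1)])
  have "Min (set ?xs) = T (0, 0)"
  proof (rule Min_eqI)
    show "finite (set ?xs)" by simp
    show "T (0, 0) \<in> set ?xs" using assms(2) by force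
    fix x assume "x \<in> set ?xs"
    then obtain j where "j < k" "x = T (0, j)" by auto
    then show "T (0, 0) \<le> x" using assms(1) unfolding Tab1 by auto
  qed
  then show ?thesis by (simp add: phi_def)
qed

lemma gq_ms:
  fixes y :: "nat \<Rightarrow> 'a::field"
  shows "gq n [k] y = (\<Sum>M\<in>MS (2*n) k. wt n y M)"
  unfolding gq_def weight_eq
  using sum.reindex_bij_betw[OF phi_bij[of k n], of "wt n y"] by simp

lemma gp_ms:
  fixes y :: "nat \<Rightarrow> 'a::field"
  assumes "k \<ge> 1"
  shows "gp n [k] y = (\<Sum>M\<in>{M\<in>MS (2*n) k. odd (Min (set_mset M))}. wt n y M)"
proof -
  have T': "Tab' n [k] = {T \<in> Tab n [k]. odd (Min (set_mset (phi k T)))}"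
    unfolding Tab'_def using Min_phi[OF _ assms] by auto
  have b: "bij_betw (phi k) (Tab' n [k]) {M\<in>MS (2*n) k. odd (Min (set_mset M))}"
    unfolding T' using phi_bij[of k n] unfolding bij_betw_def inj_on_def by auto
  show ?thesis unfolding gp_def weight_eq
    using sum.reindex_bij_betw[OF b, of "wt n y"] by simp
qed

abbreviation mn :: "nat multiset \<Rightarrow> nat" where "mn M \<equiv> Min (set_mset M)"

lemma mn_in: "M \<noteq> {#} \<Longrightarrow> mn M \<in># M" by simp
lemma mn_le: "x \<in># M \<Longrightarrow> mn M \<le> x" by simp

lemma prod_change2:
  fixes F G :: "nat \<Rightarrow> 'a::comm_monoid_mult"
  assumes "finite A" "a \<in> A" "b \<in> A" "a \<noteq> b" "\<And>l. l \<in> A \<Longrightarrow> l \<noteq> a \<Longrightarrow> l \<noteq> b \<Longrightarrow> F l = G l"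
    "F a * F b = G a * G b"
  shows "prod F A = prod G A"
proof -
  have "prod F A = F a * (F b * prod F (A - {a} - {b}))"
    using assms by (simp add: prod.remove[of A a] prod.remove[of "A - {a}" b])
  moreover have "prod G A = G a * (G b * prod G (A - {a} - {b}))"
    using assms by (simp add: prod.remove[of A a] prod.remove[of "A - {a}" b])
  moreover have "prod F (A - {a} - {b}) = prod G (A - {a} - {b})"
    using assms(5) by (intro prod.cong) auto
  ultimately show ?thesis using assms(6) by (simp add: mult.assoc[symmetric])
qed

context
  fixes y :: "nat \<Rightarrow> 'a::field" and n :: nat
begin

definition W :: "nat multiset \<Rightarrow> 'a" where
  "W M = (\<Prod>l\<in>{1..2*n}. gg y l (count M l))"

definition Pk :: "nat \<Rightarrow> nat multiset set" where
  "Pk k = {M \<in> MS (2*n) k. odd (mn M)}"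

lemma W_f:
  assumes M: "M \<in> MS (2*n) k" "M \<noteq> {#}" and ev: "even (mn M)"
  shows "W (add_mset (mn M - 1) (M - {#mn M#})) = W M"
proof -
  let ?m = "mn M"
  have m_in: "?m \<in># M" using M by simp
  have m_rng: "?m \<in> {1..2*n}" using M(1) m_in unfolding multisets_of_size_def by blast
  then have m2: "?m \<ge> 2" using ev by (auto elim: evenE)
  have c0: "count M (?m - 1) = 0"
  proof (rule ccontr)
    assume "count M (?m - 1) \<noteq> 0"
    then have "?m - 1 \<in># M" by (simp add: count_eq_zero_iff)
    then have "?m \<le> ?m - 1" by simp
    with m2 show False by simp
  qed
  have c1: "count M ?m \<ge> 1" using m_in by (simp add: Suc_le_eq)
  let ?M' = "add_mset (?m - 1) (M - {#?m#})"
  show ?thesis unfolding W_def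
  proof (rule prod_change2[where a = "?m" and b = "?m - 1"])
    show "?m \<in> {1..2*n}" by (rule m_rng)
    show "?m - 1 \<in> {1..2*n}" using m_rng m2 by auto
    show "?m \<noteq> ?m - 1" using m2 by simp
    fix l assume "l \<noteq> ?m" "l \<noteq> ?m - 1"
    then show "gg y l (count ?M' l) = gg y l (count M l)" by simp
  next
    have e1: "count ?M' ?m = count M ?m - 1" using m2 by simp
    have e2: "count ?M' (?m - 1) = 1" using c0 by simp
    have o: "odd (?m - 1)" using ev m2 by simp
    have d: "(?m - 1 + 1) div 2 = ?m div 2" using m2 by simp
    have "gg y ?m (count M ?m - 1) * gg y (?m - 1) 1 = y (?m div 2) ^ (count M ?m - 1) * y (?m div 2)"
      using ev o d by (simp add: gg_def)
    also have "\<dots> = y (?m div 2) ^ count M ?m" using c1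
      by (metis Suc_diff_le diff_Suc_1 mult.commute power_Suc)
    also have "\<dots> = gg y ?m (count M ?m) * gg y (?m - 1) (count M (?m - 1))"
      using ev o c0 by (simp add: gg_def)
    finally show "gg y ?m (count ?M' ?m) * gg y (?m - 1) (count ?M' (?m - 1)) =
        gg y ?m (count M ?m) * gg y (?m - 1) (count M (?m - 1))" using e1 e2 by simp
  qed simp
qed

lemma W_h:
  assumes M: "M \<noteq> {#}" and od: "odd (mn M)" and c: "count M (mn M) \<ge> 2"
  shows "W (M - {#mn M#}) = W M"
  unfolding W_def
proof (rule prod.cong[OF refl])
  fix l
  show "gg y l (count (M - {#mn M#}) l) = gg y l (count M l)"
    using od c by (cases "l = mn M") (auto simp: gg_def)
qed

lemma MS_ne: "M \<in> MS N k \<Longrightarrow> k \<ge> 1 \<Longrightarrow> M \<noteq> {#}"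
  by (auto simp: multisets_of_size_def)

lemma sum_U:
  assumes k: "k \<ge> 1"
  shows "(\<Sum>M\<in>MS (2*n) k - {M. odd (mn M)}. W M) = (\<Sum>M\<in>{M\<in>Pk k. count M (mn M) = 1}. W M)"
proof (rule sum.reindex_bij_witness[where j = "\<lambda>M. add_mset (mn M - 1) (M - {#mn M#})"
      and i = "\<lambda>M. add_mset (mn M + 1) (M - {#mn M#})"])
  fix M assume a: "M \<in> MS (2*n) k - {M. odd (mn M)}"
  let ?m = "mn M"
  have ne: "M \<noteq> {#}" using a k MS_ne by blast
  have m_in: "?m \<in># M" using ne by simp
  have ms: "set_mset M \<subseteq> {1..2*n}" "size M = k" using a by (auto simp: multisets_of_size_def)
  have ev: "even ?m" using a by simp
  have "?m \<ge> 1" using ms(1) m_in by auto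
  moreover have "?m \<noteq> 1" using ev by auto
  ultimately have m2: "?m \<ge> 2" by simp
  have mn': "mn (add_mset (?m - 1) (M - {#?m#})) = ?m - 1"
  proof (rule Min_eqI)
    fix x assume "x \<in># add_mset (?m - 1) (M - {#?m#})"
    then have "x = ?m - 1 \<or> x \<in># M" by (auto dest: in_diffD)
    then show "?m - 1 \<le> x" by (metis mn_le diff_le_self le_trans order_refl)
  qed auto
  have c0: "count M (?m - 1) = 0"
  proof (rule ccontr)
    assume "count M (?m - 1) \<noteq> 0"
    then have "?m - 1 \<in># M" by (simp add: count_eq_zero_iff)
    then have "?m \<le> ?m - 1" by simp
    with m2 show False by simp
  qed
  show "add_mset (mn (add_mset (?m - 1) (M - {#?m#})) + 1) (add_mset (?m - 1) (M - {#?m#}) - {#mn (add_mset (?m - 1) (M - {#?m#}))#}) = M"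
    unfolding mn' using m2 m_in by simp
  show "add_mset (?m - 1) (M - {#?m#}) \<in> {M \<in> Pk k. count M (mn M) = 1}"
    unfolding Pk_def mem_Collect_eq mn'
  proof (intro conjI)
    show "add_mset (?m - 1) (M - {#?m#}) \<in> MS (2*n) k"
    proof -
      have p: "size M > 0" using ne by (simp add: nonempty_has_size)
      have sz: "size (add_mset (?m - 1) (M - {#?m#})) = k"
        using m_in ms(2) p by (simp add: size_Diff_singleton)
      have mm: "?m \<le> 2 * n" using ms(1) m_in by auto
      have "set_mset (add_mset (?m - 1) (M - {#?m#})) \<subseteq> {1..2*n}"
        using ms(1) m2 mm by (auto dest: in_diffD)
      with sz show ?thesis by (simp add: multisets_of_size_def)
    qed
    show "odd (?m - 1)" using ev m2 by simp
    show "count (add_mset (?m - 1) (M - {#?m#})) (?m - 1) = 1" using c0 m2 by simp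
  qed
  show "W (add_mset (?m - 1) (M - {#?m#})) = W M"
    using W_f[of M k] a ne by simp
next
  fix M assume b: "M \<in> {M \<in> Pk k. count M (mn M) = 1}"
  let ?m = "mn M"
  have ne: "M \<noteq> {#}" using b k MS_ne unfolding Pk_def by blast
  have m_in: "?m \<in># M" using ne by simp
  have ms: "set_mset M \<subseteq> {1..2*n}" "size M = k" using b by (auto simp: Pk_def multisets_of_size_def)
  have od: "odd ?m" and c1: "count M ?m = 1" using b by (auto simp: Pk_def)
  have mle: "?m \<le> 2 * n" using ms m_in by auto
  have mlt: "?m + 1 \<le> 2 * n" using mle od by (cases "?m = 2*n") auto
  have ge: "x \<in># M - {#?m#} \<Longrightarrow> ?m + 1 \<le> x" for x
  proof -
    assume x: "x \<in># M - {#?m#}"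
    then have "x \<in># M" by (rule in_diffD)
    then have "?m \<le> x" by simp
    moreover have "x \<noteq> ?m" using x c1 by (metis count_eq_zero_iff diff_self_eq_0 count_diff count_single)
    ultimately show "?m + 1 \<le> x" by simp
  qed
  have mn': "mn (add_mset (?m + 1) (M - {#?m#})) = ?m + 1"
  proof (rule Min_eqI)
    fix x assume "x \<in># add_mset (?m + 1) (M - {#?m#})"
    then show "?m + 1 \<le> x" using ge by auto
  qed auto
  show "add_mset (mn (add_mset (?m + 1) (M - {#?m#})) - 1) (add_mset (?m + 1) (M - {#?m#}) - {#mn (add_mset (?m + 1) (M - {#?m#}))#}) = M"
    unfolding mn' using m_in by simp
  show "add_mset (?m + 1) (M - {#?m#}) \<in> MS (2*n) k - {M. odd (mn M)}"
  proof -
    have p: "size M > 0" using ne by (simp add: nonempty_has_size)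
    have sz: "size (add_mset (?m + 1) (M - {#?m#})) = k"
      using m_in ms(2) p by (simp add: size_Diff_singleton)
    have "set_mset (add_mset (?m + 1) (M - {#?m#})) \<subseteq> {1..2*n}"
      using ms(1) mlt by (auto dest: in_diffD)
    moreover have "\<not> odd (?m + 1)" using od by simp
    ultimately show ?thesis using sz mn' by (simp add: multisets_of_size_def)
  qed
qed

lemma sum_Q2:
  assumes k: "k \<ge> 2"
  shows "(\<Sum>M\<in>Pk k - {M. count M (mn M) = 1}. W M) = (\<Sum>M\<in>Pk (k - 1). W M)"
proof (rule sum.reindex_bij_witness[where j = "\<lambda>M. M - {#mn M#}" and i = "\<lambda>M. add_mset (mn M) M"])
  fix M assume a: "M \<in> Pk k - {M. count M (mn M) = 1}"
  let ?m = "mn M"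
  have ne: "M \<noteq> {#}" using a k MS_ne unfolding Pk_def by force
  have m_in: "?m \<in># M" using ne by simp
  have ms: "set_mset M \<subseteq> {1..2*n}" "size M = k" using a by (auto simp: Pk_def multisets_of_size_def)
  have od: "odd ?m" and c2': "count M ?m \<noteq> 1" using a by (auto simp: Pk_def)
  have "count M ?m \<ge> 1" using m_in by (simp add: Suc_le_eq)
  with c2' have c2: "count M ?m \<ge> 2" by linarith
  have mn': "mn (M - {#?m#}) = ?m"
  proof (rule Min_eqI)
    show "?m \<in># M - {#?m#}" using c2 by (simp add: in_diff_count)
  qed (auto dest: in_diffD)
  show "add_mset (mn (M - {#?m#})) (M - {#?m#}) = M" unfolding mn' using m_in by simp
  show "M - {#?m#} \<in> Pk (k - 1)"
    unfolding Pk_def mem_Collect_eq mn' using ms m_in od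
    by (auto simp: multisets_of_size_def size_Diff_singleton dest: in_diffD)
  show "W (M - {#?m#}) = W M" by (rule W_h[OF ne od c2])
next
  fix M assume b: "M \<in> Pk (k - 1)"
  let ?m = "mn M"
  have ne: "M \<noteq> {#}" using b k MS_ne[of M "2*n" "k-1"] unfolding Pk_def by force
  have m_in: "?m \<in># M" using ne by simp
  have mn'': "Min (insert ?m (set_mset M)) = ?m"
    using m_in by (simp add: insert_absorb)
  have mn': "mn (add_mset ?m M) = ?m"
    using m_in by (simp add: insert_absorb)
  show "add_mset (mn M) M - {#mn (add_mset (mn M) M)#} = M" unfolding mn' by simp
  show "add_mset (mn M) M \<in> Pk k - {M. count M (mn M) = 1}"
    using b k m_in mn'' unfolding mn' Pk_def by (auto simp: multisets_of_size_def)
qed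

lemma Q2_one: "Pk 1 - {M. count M (mn M) = 1} = {}"
proof -
  have "count M (mn M) = 1" if "M \<in> Pk 1" for M
  proof -
    have "size M = 1" using that by (simp add: Pk_def multisets_of_size_def)
    then obtain x where "M = {#x#}" using size_1_singleton_mset by blast
    then show ?thesis by simp
  qed
  then show ?thesis by auto
qed

lemma fin_MS: "finite (MS (2*n) k)" by (rule finite_multisets_of_size) simp

lemma main_comb:
  assumes k: "k \<ge> 1"
  shows "(\<Sum>M\<in>MS (2*n) k. W M) = 2 * (\<Sum>M\<in>Pk k. W M) - (if k \<ge> 2 then (\<Sum>M\<in>Pk (k - 1). W M) else 0)"
proof -
  have finP: "finite (Pk k)" unfolding Pk_def using fin_MS by simp
  have "(\<Sum>M\<in>MS (2*n) k. W M) = (\<Sum>M\<in>Pk k. W M) + (\<Sum>M\<in>MS (2*n) k - {M. odd (mn M)}. W M)"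
  proof -
    have "MS (2*n) k \<inter> {M. odd (mn M)} = Pk k" by (auto simp: Pk_def)
    then show ?thesis using sum.Int_Diff[OF fin_MS, where g = W and B = "{M. odd (mn M)}"] by simp
  qed
  also have "(\<Sum>M\<in>MS (2*n) k - {M. odd (mn M)}. W M) = (\<Sum>M\<in>{M\<in>Pk k. count M (mn M) = 1}. W M)"
    by (rule sum_U[OF k])
  also have "\<dots> = (\<Sum>M\<in>Pk k. W M) - (\<Sum>M\<in>Pk k - {M. count M (mn M) = 1}. W M)"
  proof -
    have "Pk k \<inter> {M. count M (mn M) = 1} = {M\<in>Pk k. count M (mn M) = 1}" by auto
    then show ?thesis using sum.Int_Diff[OF finP, where g = W and B = "{M. count M (mn M) = 1}"] by simp
  qed
  also have "(\<Sum>M\<in>Pk k - {M. count M (mn M) = 1}. W M) = (if k \<ge> 2 then (\<Sum>M\<in>Pk (k - 1). W M) else 0)"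
  proof (cases "k \<ge> 2")
    case True then show ?thesis using sum_Q2 by simp
  next
    case False then have "k = 1" using k by simp
    then have "Pk k - {M. count M (mn M) = 1} = {}" using Q2_one by (simp only:)
    then show ?thesis using False by (simp only: sum.empty if_False)
  qed
  finally show ?thesis by simp
qed

end

lemma dbr_nth:
  "fps_nth (dbr (-1::'a::field) k) m =
     (if k = 0 then (if m = 0 then 1 else 0) else (if m = k then 2 else if m = k + 1 then -1 else 0))"
proof (cases k)
  case 0 then show ?thesis by (simp add: dbr_def)
next
  case (Suc j)
  have c: "fps_const (-1::'a) = -1" by (metis fps_const_neg fps_const_1_eq_1)
  have "dbr (-1::'a) (Suc j) = fps_X ^ Suc j + fps_X ^ Suc j - fps_X ^ Suc (Suc j)"
    unfolding dbr_def fgl_add_def c by (simp add: algebra_simps)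
  then have e: "dbr (-1::'a) k = fps_X ^ k + fps_X ^ k - fps_X ^ (k + 1)" using Suc by simp
  show ?thesis unfolding e using Suc by (simp only: fps_add_nth fps_sub_nth fps_X_power_nth) auto
qed

definition cf :: "(nat \<Rightarrow> 'a::field) \<Rightarrow> nat \<Rightarrow> 'a" where
  "cf p m = fps_nth (\<Sum>k\<le>m. dbr (-1) k * fps_const (p k)) m"

lemma cf_0: "cf p 0 = p 0"
  by (simp add: cf_def dbr_nth)

lemma cf_pos:
  assumes "m \<ge> 1"
  shows "cf p m = 2 * p m - (if m \<ge> 2 then p (m - 1) else 0)"
proof -
  have "cf p m = (\<Sum>k\<le>m. fps_nth (dbr (-1) k) m * p k)"
    by (simp add: cf_def fps_sum_nth)
  also have "\<dots> = (\<Sum>k\<in>{m - 1, m}. fps_nth (dbr (-1) k) m * p k)"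
    by (rule sum.mono_neutral_right) (auto simp: dbr_nth)
  also have "\<dots> = 2 * p m - (if m \<ge> 2 then p (m - 1) else 0)"
    using assms by (auto simp: dbr_nth)
  finally show ?thesis .
qed

lemma cf_unique:
  fixes p p' :: "nat \<Rightarrow> 'a::field_char_0"
  assumes "\<forall>m. cf p m = cf p' m"
  shows "p = p'"
proof
  fix m show "p m = p' m"
  proof (induction m rule: less_induct)
    case (less m)
    show ?case
    proof (cases "m = 0")
      case True then show ?thesis using assms cf_0 by metis
    next
      case False
      then have "2 * p m - (if m \<ge> 2 then p (m - 1) else 0) = 2 * p' m - (if m \<ge> 2 then p' (m - 1) else 0)"
        using assms cf_pos[of m p] cf_pos[of m p'] by simp
      moreover have "p (m - 1) = p' (m - 1)" using less False by simp
      ultimately show ?thesis by (auto split: if_splits)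
    qed
  qed
qed

lemma Delta_nth:
  fixes y :: "nat \<Rightarrow> 'a::field"
  shows "fps_nth (Delta (-1) n y) k = gq n [k] y"
  unfolding Delta_prod gen_fun[symmetric] gq_ms wt_def ..

lemma Delta_0:
  fixes y :: "nat \<Rightarrow> 'a::field"
  shows "fps_nth (Delta (-1) n y) 0 = 1"
proof -
  have "MS (2*n) 0 = {{#}}" by (auto simp: multisets_of_size_def)
  moreover have g0: "gg y l 0 = 1" for l by (simp add: gg_def)
  ultimately show ?thesis unfolding Delta_nth gq_ms wt_def by (simp add: g0)
qed

theorem mainTheorem10:
  fixes y :: "nat \<Rightarrow> 'a::field_char_0" and n k :: nat
  assumes "k \<ge> 1"
  shows "gp n [k] y = hat_p (-1) n y k \<and> gq n [k] y = hat_q (-1) n y k"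
proof
  show "gq n [k] y = hat_q (-1) n y k" unfolding hat_q_def Delta_nth ..
  define pp where "pp m = (if m = 0 then 1 else gp n [m] y)" for m
  have Wwt: "W y n M = wt n y M" for M unfolding W_def wt_def ..
  have P: "\<forall>m. fps_nth (Delta (-1) n y) m = cf pp m"
  proof
    fix m
    show "fps_nth (Delta (-1) n y) m = cf pp m"
    proof (cases "m = 0")
      case True then show ?thesis by (simp add: Delta_0 cf_0 pp_def)
    next
      case False
      then have m: "m \<ge> 1" by simp
      have gpP: "gp n [j] y = (\<Sum>M\<in>Pk n j. W y n M)" if "j \<ge> 1" for j
        using gp_ms[OF that] unfolding Pk_def Wwt by simp
      have "fps_nth (Delta (-1) n y) m = (\<Sum>M\<in>MS (2*n) m. W y n M)"
        unfolding Delta_nth gq_ms Wwt ..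
      also have "\<dots> = 2 * (\<Sum>M\<in>Pk n m. W y n M) - (if m \<ge> 2 then (\<Sum>M\<in>Pk n (m - 1). W y n M) else 0)"
        by (rule main_comb[OF m])
      also have "\<dots> = cf pp m"
        using m gpP[OF m] gpP[of "m - 1"] by (auto simp: cf_pos pp_def)
      finally show ?thesis .
    qed
  qed
  have "hat_p (-1) n y = pp"
    unfolding hat_p_def
  proof (rule the_equality)
    show "\<forall>m. fps_nth (Delta (-1) n y) m = fps_nth (\<Sum>k\<le>m. dbr (-1) k * fps_const (pp k)) m"
      using P unfolding cf_def .
    fix p assume "\<forall>m. fps_nth (Delta (-1) n y) m = fps_nth (\<Sum>k\<le>m. dbr (-1) k * fps_const (p k)) m"
    then have "\<forall>m. cf p m = cf pp m" using P unfolding cf_def by simp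
    then show "p = pp" by (rule cf_unique)
  qed
  then show "gp n [k] y = hat_p (-1) n y k" using assms by (simp add: pp_def)
qed

end
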